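(* Let $n\ge3$ and let $I\subseteq(0,+\infty)$ be a bounded interval. Then for every $V\in H^1(I)$, $$\sup_{s\in I}s^{\frac n2-1}|V(s)|\le C\Big[\Big(\int_I s^{n-1}|V'(s)|^2ds\Big)^{1/2}+|I|^{-1}\Big(\int_I s^{n-1}|V(s)|^2ds\Big)^{1/2}\Big],$$ with a constant $C$ independent of $I$ and $V$.
   Context: $|I|$ denotes the length of $I$. *)

theory Defs
  imports "HOL-Analysis.Analysis"
begin

text \<open>One-dimensional Sobolev space H^1(I), in its continuous representative:
  V is continuous on I, g is a weak derivative of V on I (V y - V x is the integral of g
  over [x,y] for x \<le> y in I), and V, g are in L^2(I).  (For a bounded interval this is
  exactly H^1(I), every element having such a continuous representative.)\<close>
definition H1_with_deriv :: "(real \<Rightarrow> real) \<Rightarrow> (real \<Rightarrow> real) \<Rightarrow> real set \<Rightarrow> bool" where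
  "H1_with_deriv V g I \<longleftrightarrow>
     continuous_on I V \<and>
     V absolutely_integrable_on I \<and> (\<lambda>s. (V s)^2) integrable_on I \<and>
     g absolutely_integrable_on I \<and> (\<lambda>s. (g s)^2) integrable_on I \<and>
     (\<forall>x\<in>I. \<forall>y\<in>I. x \<le> y \<longrightarrow> V y - V x = integral {x..y} g)"

definition ilength :: "real set \<Rightarrow> real" where
  "ilength I = Sup I - Inf I"

end

theory Submission imports Defs begin

lemma weighted_abs_int:
  fixes h :: "real \<Rightarrow> real"
  assumes I: "is_interval I" "bounded I"
    and h: "(\<lambda>s. (h s)^2) integrable_on I"
  shows "(\<lambda>s. s ^ k * (h s)^2) absolutely_integrable_on I"
proof -
  have meas: "I \<in> sets lebesgue"
    using measurable_convex[OF is_interval_convex[OF I(1)] I(2)] by (simp add: fmeasurableD)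
  have a: "(\<lambda>s. (h s)^2) absolutely_integrable_on I"
    by (rule nonnegative_absolutely_integrable[OF h]) (auto simp: Basis_real_def)
  obtain M where M: "\<And>x. x \<in> I \<Longrightarrow> norm x \<le> M" using I(2) bounded_iff by blast
  have bd: "bounded ((\<lambda>s::real. s ^ k) ` I)"
    unfolding bounded_iff
  proof (intro exI ballI)
    fix y assume "y \<in> (\<lambda>s::real. s ^ k) ` I"
    then obtain x where "x \<in> I" "y = x ^ k" by blast
    then show "norm y \<le> M ^ k"
      using M[of x] by (metis abs_ge_zero power_abs power_mono real_norm_def)
  qed
  have "(\<lambda>s::real. s ^ k) \<in> borel_measurable (lebesgue_on I)"
    by (rule continuous_imp_measurable_on_sets_lebesgue[OF _ meas]) (intro continuous_intros)
  then show ?thesis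
    using absolutely_integrable_bounded_measurable_product_real[OF _ meas bd a] by blast
qed

lemma inv_pow_integral:
  fixes p q :: real
  assumes "0 < p" "p \<le> q" "n \<ge> 3"
  shows "(\<lambda>r. 1 / r ^ (n - 1)) integrable_on {p..q}"
    "integral {p..q} (\<lambda>r. 1 / r ^ (n - 1)) \<le> 1 / p ^ (n - 2)"
proof -
  define F where "F = (\<lambda>r::real. - 1 / ((real n - 2) * r ^ (n - 2)))"
  have der: "(F has_vector_derivative (1 / r ^ (n - 1))) (at r within {p..q})" if "r \<in> {p..q}" for r
  proof -
    have r: "r > 0" using that assms by auto
    define k where "k = n - 3"
    have k: "n = Suc (Suc (Suc k))" using assms(3) unfolding k_def by simp
    have "(F has_real_derivative (1 / r ^ (n - 1))) (at r within {p..q})"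
    proof -
      have e: "F = (\<lambda>r. - 1 / ((real k + 1) * r ^ Suc k))" unfolding F_def k by (simp add: add.commute)
      have "((\<lambda>r. - 1 / ((real k + 1) * r ^ Suc k)) has_real_derivative
          (1 / r ^ Suc (Suc k))) (at r within {p..q})"
        apply (rule derivative_eq_intros refl)+
        using r apply (simp add: add_pos_pos)
        proof -
          have pk: "r ^ k > 0" using r by simp
          define D where "D = (real k + 1) * (real k + 1) * r ^ k"
          have Dnz: "D \<noteq> 0" unfolding D_def using pk r by simp
          have num: "(0 * ((real k + 1) * r ^ Suc k) -
             - 1 * (0 * r ^ Suc k + real (Suc k) * (1 * r ^ (Suc k - Suc 0)) * (real k + 1))) = D"
            unfolding D_def by (simp add: algebra_simps)
          have den: "((real k + 1) * r ^ Suc k * ((real k + 1) * r ^ Suc k)) = D * r ^ Suc (Suc k)"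
            unfolding D_def by (simp add: algebra_simps)
          show "(0 * ((real k + 1) * r ^ Suc k) -
             - 1 * (0 * r ^ Suc k + real (Suc k) * (1 * r ^ (Suc k - Suc 0)) * (real k + 1))) /
            ((real k + 1) * r ^ Suc k * ((real k + 1) * r ^ Suc k)) = 1 / r ^ Suc (Suc k)"
            unfolding num den using Dnz by simp
        qed
      then show ?thesis unfolding e k by simp
    qed
    then show ?thesis using has_real_derivative_iff_has_vector_derivative by blast
  qed
  have hi: "((\<lambda>r. 1 / r ^ (n - 1)) has_integral (F q - F p)) {p..q}"
    by (rule fundamental_theorem_of_calculus[OF assms(2)]) (use der in auto)
  then show "(\<lambda>r. 1 / r ^ (n - 1)) integrable_on {p..q}" by blast
  have "F q - F p \<le> - F p"
    using assms by (simp add: F_def)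
  also have "\<dots> \<le> 1 / p ^ (n - 2)"
    using assms by (simp add: F_def field_simps)
  finally show "integral {p..q} (\<lambda>r. 1 / r ^ (n - 1)) \<le> 1 / p ^ (n - 2)"
    using hi by (simp add: integral_unique)
qed


lemma powr_sq:
  fixes p :: real
  assumes "0 < p" "n \<ge> 3"
  shows "(p powr (real n / 2 - 1))^2 = p ^ (n - 2)"
proof -
  have "(p powr (real n / 2 - 1))^2 = p powr (real 2 * (real n / 2 - 1))"
    using assms by (simp add: powr_power)
  also have "real 2 * (real n / 2 - 1) = real (n - 2)" using assms by (simp add: of_nat_diff)
  also have "p powr real (n - 2) = p ^ (n - 2)" by (rule powr_realpow[OF assms(1)])
  finally show ?thesis .
qed

lemma pointwise_amgm:
  fixes P u x l :: real
  assumes "u > 0" "l > 0"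
  shows "2 * P * \<bar>x\<bar> \<le> l * (u * x^2) + (P^2 / l) * (1 / u)"
proof -
  have "l * (u * x^2) + (P^2 / l) * (1 / u) - 2 * P * \<bar>x\<bar> = (l * u * \<bar>x\<bar> - P)^2 / (l * u)"
    using assms by (simp add: field_simps power2_eq_square)
  moreover have "(l * u * \<bar>x\<bar> - P)^2 / (l * u) \<ge> 0" using assms by simp
  ultimately show ?thesis by linarith
qed

lemma cs_bound:
  fixes g :: "real \<Rightarrow> real"
  assumes n: "n \<ge> 3" and pq: "0 < p" "p \<le> q" "{p..q} \<subseteq> I"
    and gI: "g absolutely_integrable_on I"
    and wI: "(\<lambda>r. r^(n-1)*(g r)^2) absolutely_integrable_on I"
    and nn: "\<forall>r\<in>I. 0 \<le> r^(n-1)*(g r)^2"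
  shows "p powr (real n/2 - 1) * integral {p..q} (\<lambda>r. \<bar>g r\<bar>)
           \<le> sqrt (integral I (\<lambda>r. r^(n-1)*(g r)^2))"
proof -
  define P where "P = p powr (real n/2 - 1)"
  have P2: "P^2 = p^(n-2)" unfolding P_def using powr_sq pq n by blast
  have P0: "P \<ge> 0" unfolding P_def by simp
  define w where "w = (\<lambda>r::real. r^(n-1)*(g r)^2)"
  define B2 where "B2 = integral I w"
  define B where "B = sqrt B2"
  have wIi: "w integrable_on I" using wI unfolding w_def absolutely_integrable_on_def by blast
  have B20: "B2 \<ge> 0" unfolding B2_def by (rule integral_nonneg[OF wIi]) (use nn in \<open>simp add: w_def\<close>)
  have B0: "B \<ge> 0" unfolding B_def using B20 by simp
  have BB: "B^2 = B2" unfolding B_def using B20 by simp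
  have wpq: "w integrable_on {p..q}"
    using absolutely_integrable_on_subinterval[OF wI pq(3)] unfolding w_def absolutely_integrable_on_def by blast
  have gpq: "(\<lambda>r. \<bar>g r\<bar>) integrable_on {p..q}"
    using absolutely_integrable_on_subinterval[OF gI pq(3)] unfolding absolutely_integrable_on_def by simp
  have ipq: "(\<lambda>r. 1 / r ^ (n - 1)) integrable_on {p..q}"
    and W: "integral {p..q} (\<lambda>r. 1 / r ^ (n - 1)) \<le> 1 / p ^ (n - 2)"
    using inv_pow_integral[OF pq(1,2) n] by auto
  have Bpq: "integral {p..q} w \<le> B2"
    unfolding B2_def by (rule integral_subset_le[OF pq(3) wpq wIi]) (use nn in \<open>simp add: w_def\<close>)
  define G where "G = integral {p..q} (\<lambda>r. \<bar>g r\<bar>)"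
  have key: "2 * P * G \<le> l * B2 + 1 / l" if l: "l > 0" for l
  proof -
    have "integral {p..q} (\<lambda>r. 2 * P * \<bar>g r\<bar>)
          \<le> integral {p..q} (\<lambda>r. l * w r + (P^2 / l) * (1 / r ^ (n - 1)))"
    proof (rule integral_le)
      show "(\<lambda>r. 2 * P * \<bar>g r\<bar>) integrable_on {p..q}" using integrable_on_cmult_left[OF gpq, of "2 * P"] by simp
      show "(\<lambda>r. l * w r + (P^2 / l) * (1 / r ^ (n - 1))) integrable_on {p..q}"
        using integrable_on_cmult_left[OF wpq, of l] integrable_on_cmult_left[OF ipq, of "P^2 / l"]
        by (intro integrable_add) simp_all
      show "2 * P * \<bar>g r\<bar> \<le> l * w r + (P^2 / l) * (1 / r ^ (n - 1))" if "r \<in> {p..q}" for r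
        unfolding w_def using pointwise_amgm[of "r^(n-1)" l P "g r"] that pq l by simp
    qed
    also have "\<dots> = l * integral {p..q} w + (P^2 / l) * integral {p..q} (\<lambda>r. 1 / r ^ (n - 1))"
      using integrable_on_cmult_left[OF wpq, of l] integrable_on_cmult_left[OF ipq, of "P^2 / l"]
      by (simp only: integral_add integral_mult[OF wpq, symmetric] integral_mult[OF ipq, symmetric] of_real_eq_id id_def)
    also have "\<dots> \<le> l * B2 + (P^2 / l) * (1 / p ^ (n - 2))"
      using Bpq W l by (intro add_mono mult_left_mono) auto
    also have "(P^2 / l) * (1 / p ^ (n - 2)) = 1 / l" using P2 pq by simp
    finally show ?thesis unfolding G_def by simp
  qed
  have "P * G \<le> B + e" if e: "e > 0" for e
  proof -
    have le: "2 * P * G \<le> (1 / (B + e)) * B2 + 1 / (1 / (B + e))"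
      using key[of "1 / (B + e)"] B0 e by simp
    have "B2 \<le> (B + e)^2" unfolding BB[symmetric] using B0 e by (intro power_mono) auto
    then have "(1 / (B + e)) * B2 \<le> B + e" using B0 e by (simp add: field_simps power2_eq_square)
    then show ?thesis using le by simp
  qed
  then have "P * G \<le> B" by (rule field_le_epsilon)
  then show ?thesis unfolding P_def G_def B_def B2_def w_def .
qed


theorem lemma3p6:
  fixes n :: nat
  assumes "n \<ge> 3"
  shows "\<exists>C. \<forall>(I :: real set) V g.
           is_interval I \<and> bounded I \<and> I \<subseteq> {0<..} \<and> Inf I < Sup I \<and>
           H1_with_deriv V g I \<longrightarrow>
           (\<forall>s\<in>I. s powr (real n / 2 - 1) * \<bar>V s\<bar> \<le>
              C * (sqrt (integral I (\<lambda>s. s ^ (n - 1) * (g s)^2))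
                   + (1 / ilength I) * sqrt (integral I (\<lambda>s. s ^ (n - 1) * (V s)^2))))"
proof (intro exI[of _ "3 * 2 powr (real n / 2 - 1)"] allI impI ballI)
  fix I :: "real set" and V g :: "real \<Rightarrow> real" and s :: real
  assume H: "is_interval I \<and> bounded I \<and> I \<subseteq> {0<..} \<and> Inf I < Sup I \<and> H1_with_deriv V g I"
    and sI: "s \<in> I"
  define e where "e = real n / 2 - 1"
  have e0: "e \<ge> 0" unfolding e_def using assms by simp
  have iv: "is_interval I" using H by blast
  have bd: "bounded I" using H by blast
  have pos: "I \<subseteq> {0<..}" using H by blast
  have ab: "Inf I < Sup I" using H by blast
  have H1: "H1_with_deriv V g I" using H by blast
  have contV: "continuous_on I V" using H1 unfolding H1_with_deriv_def by blast
  have V2: "(\<lambda>s. (V s)^2) integrable_on I" using H1 unfolding H1_with_deriv_def by blast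
  have gI: "g absolutely_integrable_on I" using H1 unfolding H1_with_deriv_def by blast
  have g2: "(\<lambda>s. (g s)^2) integrable_on I" using H1 unfolding H1_with_deriv_def by blast
  have ftc0: "\<forall>x\<in>I. \<forall>y\<in>I. x \<le> y \<longrightarrow> V y - V x = integral {x..y} g"
    using H1 unfolding H1_with_deriv_def by blast
  have ftc: "V y - V x = integral {x..y} g" if "x \<in> I" "y \<in> I" "x \<le> y" for x y
    using ftc0 that by blast
  define a where "a = Inf I"
  define b where "b = Sup I"
  define L where "L = b - a"
  have ne: "I \<noteq> {}" using sI by blast
  have bdb: "bdd_below I" by (rule bounded_imp_bdd_below[OF bd])
  have bda: "bdd_above I" by (rule bounded_imp_bdd_above[OF bd])
  have a0: "0 \<le> a" unfolding a_def
  proof (rule cInf_greatest[OF ne])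
    show "0 \<le> x" if "x \<in> I" for x using pos that by auto
  qed
  have L0: "L > 0" unfolding L_def a_def b_def using ab by simp
  have len: "ilength I = L" unfolding ilength_def L_def a_def b_def by simp
  have sab: "a \<le> s" "s \<le> b" unfolding a_def b_def
    by (rule cInf_lower[OF sI bdb], rule cSup_upper[OF sI bda])
  have ivr: "\<And>u v x. u \<in> I \<Longrightarrow> v \<in> I \<Longrightarrow> u \<le> x \<Longrightarrow> x \<le> v \<Longrightarrow> x \<in> I"
    using iv unfolding is_interval_1 by blast
  have inI: "x \<in> I" if xab: "a < x" "x < b" for x
  proof -
    obtain y where y: "y \<in> I" "y < x" using xab(1) cInf_less_iff[OF ne bdb] unfolding a_def by blast
    obtain z where z: "z \<in> I" "x < z" using xab(2) less_cSup_iff[OF ne bda] unfolding b_def by blast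
    show ?thesis using ivr[OF y(1) z(1)] y(2) z(2) by simp
  qed
  have subI: "{x..y} \<subseteq> I" if "x \<in> I" "y \<in> I" for x y
    using ivr[OF that] by auto
  have Ipos: "r > 0" if "r \<in> I" for r using pos that by auto
  define f where "f = (\<lambda>t::real. t ^ (n - 1) * (V t)^2)"
  have wV: "f absolutely_integrable_on I" unfolding f_def by (rule weighted_abs_int[OF iv bd V2])
  have wg: "(\<lambda>r. r^(n-1)*(g r)^2) absolutely_integrable_on I" by (rule weighted_abs_int[OF iv bd g2])
  have nng: "\<forall>r\<in>I. 0 \<le> r^(n-1)*(g r)^2"
  proof
    fix r assume "r \<in> I"
    then have "r > 0" by (rule Ipos)
    then show "0 \<le> r^(n-1)*(g r)^2" by simp
  qed
  have nnf: "\<forall>r\<in>I. 0 \<le> f r"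
  proof
    fix r assume "r \<in> I"
    then have "r > 0" by (rule Ipos)
    then show "0 \<le> f r" by (simp add: f_def)
  qed
  define m where "m = (a + b) / 2"
  define c where "c = (m + b) / 2"
  have mc: "m \<le> c" "a < m" "c < b" unfolding m_def c_def using L0 L_def by auto
  have mcI: "{m..c} \<subseteq> I" using mc inI by auto
  have contf: "continuous_on {m..c} f"
    unfolding f_def using continuous_on_subset[OF contV mcI] by (intro continuous_intros) auto
  obtain t0 where t0: "t0 \<in> {m..c}" "\<And>y. y \<in> {m..c} \<Longrightarrow> f t0 \<le> f y"
    using continuous_attains_inf[OF compact_Icc _ contf] mc by auto
  have t0I: "t0 \<in> I" using t0 mcI by auto
  define A2 where "A2 = integral I f"
  have "(c - m) * f t0 = integral {m..c} (\<lambda>_. f t0)" using mc by simp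
  also have "\<dots> \<le> integral {m..c} f"
  proof (rule integral_le)
    show "(\<lambda>_. f t0) integrable_on {m..c}" by (rule integrable_continuous_interval[OF continuous_on_const])
    show "f integrable_on {m..c}" by (rule integrable_continuous_interval[OF contf])
    show "f t0 \<le> f x" if "x \<in> {m..c}" for x using t0(2) that by blast
  qed
  also have "\<dots> \<le> A2" unfolding A2_def
    using integral_subset_le[OF mcI integrable_continuous_interval[OF contf]] wV nnf
    unfolding absolutely_integrable_on_def by blast
  finally have ft0: "(L / 4) * f t0 \<le> A2" unfolding c_def m_def L_def by (simp add: field_simps)
  have A20: "A2 \<ge> 0" unfolding A2_def using wV nnf unfolding absolutely_integrable_on_def by (intro integral_nonneg) auto
  have t0m: "t0 \<ge> L / 2" using t0 a0 unfolding m_def L_def by auto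
  define Y where "Y = t0 ^ (n - 2) * (V t0)^2"
  have Y0: "Y \<ge> 0" unfolding Y_def using Ipos[OF t0I] by simp
  have n12: "n - 1 = Suc (n - 2)" using assms by simp
  have fY: "f t0 = t0 * Y" unfolding f_def Y_def n12 by simp
  have "(L / 2) * Y \<le> t0 * Y" using t0m Y0 by (intro mult_right_mono)
  also have "\<dots> \<le> 4 * A2 / L" using ft0 fY L0 by (simp add: field_simps)
  finally have "Y \<le> 8 * A2 / L^2" using L0 by (simp add: field_simps power2_eq_square)
  also have "\<dots> \<le> (3 * sqrt A2 / L)^2" using A20 L0 by (simp add: power_divide power_mult_distrib divide_right_mono)
  finally have "(t0 powr e * \<bar>V t0\<bar>)^2 \<le> (3 * sqrt A2 / L)^2"
    unfolding Y_def e_def using powr_sq[OF Ipos[OF t0I] assms] by (simp add: power_mult_distrib)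
  then have T0: "t0 powr e * \<bar>V t0\<bar> \<le> 3 * sqrt A2 / L"
    by (rule power2_le_imp_le) (use A20 L0 in simp)
  have t0m2: "t0 \<ge> m" using t0 by auto
  have s2: "s \<le> 2 * t0" using sab t0m2 a0 unfolding m_def by (simp add: field_simps)
  have spos: "s > 0" using Ipos[OF sI] .
  have st0: "s powr e \<le> 2 powr e * t0 powr e"
  proof -
    have "s powr e \<le> (2 * t0) powr e" using s2 spos e0 by (intro powr_mono2) auto
    then show ?thesis by (simp add: powr_mult)
  qed
  have ge1: "2 powr e \<ge> 1" using e0 by (intro ge_one_powr_ge_zero) auto
  define p where "p = min s t0"
  define q where "q = max s t0"
  have pq: "p \<le> q" "0 < p" "p \<in> I" "q \<in> I" unfolding p_def q_def using sI t0I spos Ipos[OF t0I] by (auto simp: min_def max_def)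
  have sub: "{p..q} \<subseteq> I" using subI pq by auto
  have diff: "\<bar>V s - V t0\<bar> = \<bar>integral {p..q} g\<bar>"
  proof (cases "s \<le> t0")
    case True
    then show ?thesis using ftc[OF sI t0I] unfolding p_def q_def by simp
  next
    case False
    then show ?thesis using ftc[OF t0I sI] unfolding p_def q_def by simp
  qed
  have gpq: "g absolutely_integrable_on {p..q}" by (rule absolutely_integrable_on_subinterval[OF gI sub])
  have "\<bar>integral {p..q} g\<bar> \<le> integral {p..q} (\<lambda>r. \<bar>g r\<bar>)"
    using gpq unfolding absolutely_integrable_on_def
    by (intro integral_norm_bound_integral[where f=g, simplified]) auto
  define G where "G = integral {p..q} (\<lambda>r. \<bar>g r\<bar>)"
  define B where "B = sqrt (integral I (\<lambda>r. r^(n-1)*(g r)^2))"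
  have dG: "\<bar>V s - V t0\<bar> \<le> G" using diff \<open>\<bar>integral {p..q} g\<bar> \<le> _\<close> unfolding G_def by simp
  have CS: "p powr e * G \<le> B" unfolding G_def B_def e_def
    by (rule cs_bound[OF assms pq(2,1) sub gI wg nng])
  have B0: "B \<ge> 0" unfolding B_def
    using integral_nonneg[of "\<lambda>r. r^(n-1)*(g r)^2" I] wg nng unfolding absolutely_integrable_on_def by simp
  have sp: "s powr e \<le> 2 powr e * p powr e"
  proof (cases "s \<le> t0")
    case True
    then have "p = s" unfolding p_def by simp
    then show ?thesis using mult_right_mono[OF ge1, of "s powr e"] by simp
  next
    case False
    then show ?thesis using st0 unfolding p_def by simp
  qed
  have G0: "G \<ge> 0" using dG by linarith
  have "s powr e * \<bar>V s\<bar> \<le> s powr e * \<bar>V t0\<bar> + s powr e * \<bar>V s - V t0\<bar>"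
  proof -
    have "\<bar>V s\<bar> \<le> \<bar>V t0\<bar> + \<bar>V s - V t0\<bar>" using abs_triangle_ineq[of "V t0" "V s - V t0"] by simp
    then have "s powr e * \<bar>V s\<bar> \<le> s powr e * (\<bar>V t0\<bar> + \<bar>V s - V t0\<bar>)" by (rule mult_left_mono) simp
    then show ?thesis by (simp add: distrib_left)
  qed
  also have "\<dots> \<le> (2 powr e * t0 powr e) * \<bar>V t0\<bar> + (2 powr e * p powr e) * G"
    using st0 sp dG by (intro add_mono mult_mono) auto
  also have "\<dots> = 2 powr e * (t0 powr e * \<bar>V t0\<bar>) + 2 powr e * (p powr e * G)" by simp
  also have "\<dots> \<le> 2 powr e * (3 * sqrt A2 / L) + 2 powr e * B"
    using T0 CS by (intro add_mono mult_left_mono) auto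
  also have "\<dots> \<le> 3 * 2 powr e * (B + (1 / L) * sqrt A2)"
    using B0 by (simp add: algebra_simps)
  finally show "s powr (real n / 2 - 1) * \<bar>V s\<bar> \<le>
      3 * 2 powr (real n / 2 - 1) * (sqrt (integral I (\<lambda>s. s ^ (n - 1) * (g s)^2))
                   + (1 / ilength I) * sqrt (integral I (\<lambda>s. s ^ (n - 1) * (V s)^2)))"
    unfolding e_def B_def A2_def f_def len .
qed

end
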